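(* Let $R$ be the bracket algebra on six points, i.e. the subring of $\mathbb{C}[u_{ij}: 0\le i\le 3, 0\le j\le 5]$ generated by the $4\times4$ minors $[abcd]$ (columns $a,b,c,d$) of a generic $4\times 6$ matrix with columns labelled $0,\dots,5$. The symmetric group $\mathbb{S}_6$ acts on $R$ by permuting column labels, $\sigma([abcd])=[\sigma(a)\sigma(b)\sigma(c)\sigma(d)]$. Let $B=[0125][0234][1345]-[0124][2345][0135]$. Then the product $[0123][0145][2345]$ lies in the ideal of $R$ generated by $\{\sigma(B):\sigma\in\mathbb{S}_6\}$. In particular, if $0,\dots,5$ are points of $\mathbb{P}^3(\mathbb{C})$ with representative vectors such that the lines $01$, $23$, $45$ are mutually skew, then there is a permutation $\sigma$ of $\{0,\dots,5\}$ with $\sigma(B)\ne 0$ when evaluated at these vectors.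
   Context: $[abcd]$ denotes the determinant of the $4\times4$ matrix with columns the vectors labelled $a,b,c,d$. Lines $ab$ and $cd$ in $\mathbb{P}^3$ meet if and only if $[abcd]=0$. *)

theory Defs
  imports "Jordan_Normal_Form.Determinant" "HOL-Combinatorics.Permutations"
begin

text \<open>A configuration U assigns to each column label j (0..5) a vector in C^4,
  with coordinates U j i (i = 0..3). Entries outside these ranges are ignored.
  U j i plays the role of the indeterminate u_{ij}.\<close>

type_synonym config = "nat \<Rightarrow> nat \<Rightarrow> complex"

definition brk :: "config \<Rightarrow> nat \<Rightarrow> nat \<Rightarrow> nat \<Rightarrow> nat \<Rightarrow> complex" where
  "brk U a b c d = det (mat 4 4 (\<lambda>(i,j). U ([a,b,c,d] ! j) i))"

text \<open>The bracket algebra on six points, as a C-algebra of polynomial functions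
  in the entries of a 4x6 matrix (polynomials over C are determined by their
  functions, C being infinite): generated by the brackets.\<close>

inductive_set bracket_alg :: "(config \<Rightarrow> complex) set" where
  const: "(\<lambda>U. c) \<in> bracket_alg"
| bracket: "a < 6 \<Longrightarrow> b < 6 \<Longrightarrow> c < 6 \<Longrightarrow> d < 6 \<Longrightarrow> (\<lambda>U. brk U a b c d) \<in> bracket_alg"
| add: "f \<in> bracket_alg \<Longrightarrow> g \<in> bracket_alg \<Longrightarrow> (\<lambda>U. f U + g U) \<in> bracket_alg"
| mult: "f \<in> bracket_alg \<Longrightarrow> g \<in> bracket_alg \<Longrightarrow> (\<lambda>U. f U * g U) \<in> bracket_alg"

definition Bperm :: "(nat \<Rightarrow> nat) \<Rightarrow> config \<Rightarrow> complex" where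
  "Bperm \<sigma> U =
     brk U (\<sigma> 0) (\<sigma> 1) (\<sigma> 2) (\<sigma> 5) * brk U (\<sigma> 0) (\<sigma> 2) (\<sigma> 3) (\<sigma> 4)
       * brk U (\<sigma> 1) (\<sigma> 3) (\<sigma> 4) (\<sigma> 5)
   - brk U (\<sigma> 0) (\<sigma> 1) (\<sigma> 2) (\<sigma> 4) * brk U (\<sigma> 2) (\<sigma> 3) (\<sigma> 4) (\<sigma> 5)
       * brk U (\<sigma> 0) (\<sigma> 1) (\<sigma> 3) (\<sigma> 5)"

definition in_B_ideal :: "(config \<Rightarrow> complex) \<Rightarrow> bool" where
  "in_B_ideal f \<longleftrightarrow> (\<exists>r :: (nat \<Rightarrow> nat) \<Rightarrow> config \<Rightarrow> complex.
      (\<forall>\<sigma>. \<sigma> permutes {..<6} \<longrightarrow> r \<sigma> \<in> bracket_alg) \<and>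
      f = (\<lambda>U. \<Sum>\<sigma>\<in>{\<sigma>. \<sigma> permutes {..<6}}. r \<sigma> U * Bperm \<sigma> U))"

end

theory Submission
  imports Defs
begin

lemma det1: "det (mat (Suc 0) (Suc 0) f) = (f (0,0) :: 'a::comm_ring_1)"
  using det_single[of "mat (Suc 0) (Suc 0) f"] by simp
lemma det2: "det (mat (Suc (Suc 0)) (Suc (Suc 0)) f) = (f (0,0) * f(1,1) - f(0,1)*f(1,0) :: 'a::comm_ring_1)"
  apply (subst laplace_expansion_row[of _ "Suc (Suc 0)" 0]) apply simp apply simp
  apply (simp add: cofactor_def mat_delete_def det1 lessThan_Suc)
  done
lemma det3: "det (mat (Suc (Suc (Suc 0))) (Suc (Suc (Suc 0))) f) = (f (0,0) * (f(1,1)*f(2,2) - f(1,2)*f(2,1)) - f(0,1)*(f(1,0)*f(2,2) - f(1,2)*f(2,0)) + f(0,2)*(f(1,0)*f(2,1)-f(1,1)*f(2,0)) :: 'a::comm_ring_1)"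
  apply (subst laplace_expansion_row[of _ "Suc (Suc (Suc 0))" 0]) apply simp apply simp
  apply (simp add: cofactor_def mat_delete_def det2 lessThan_Suc numeral_2_eq_2)
  apply (simp_all add: algebra_simps) done
lemma det4: "det (mat 4 4 f) = (f (0,0) * (f(1,1) * (f(2,2)*f(3,3) - f(2,3)*f(3,2)) - f(1,2)*(f(2,1)*f(3,3) - f(2,3)*f(3,1)) + f(1,3)*(f(2,1)*f(3,2)-f(2,2)*f(3,1)))
 - f (0,1) * (f(1,0) * (f(2,2)*f(3,3) - f(2,3)*f(3,2)) - f(1,2)*(f(2,0)*f(3,3) - f(2,3)*f(3,0)) + f(1,3)*(f(2,0)*f(3,2)-f(2,2)*f(3,0)))
 + f (0,2) * (f(1,0) * (f(2,1)*f(3,3) - f(2,3)*f(3,1)) - f(1,1)*(f(2,0)*f(3,3) - f(2,3)*f(3,0)) + f(1,3)*(f(2,0)*f(3,1)-f(2,1)*f(3,0)))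
 - f (0,3) * (f(1,0) * (f(2,1)*f(3,2) - f(2,2)*f(3,1)) - f(1,1)*(f(2,0)*f(3,2) - f(2,2)*f(3,0)) + f(1,2)*(f(2,0)*f(3,1)-f(2,1)*f(3,0)))
 :: 'a::comm_ring_1)"
  apply (subst laplace_expansion_row[of _ 4 0]) apply simp apply simp
  apply (simp add: cofactor_def mat_delete_def det3 lessThan_Suc numeral_2_eq_2 numeral_3_eq_3 eval_nat_numeral)
  apply (simp_all add: algebra_simps) done

lemma brk_expand: "brk U a b c d = U a 0 * U b 1 * U c 2 * U d 3 - U a 0 * U b 1 * U d 2 * U c 3 - U a 0 * U c 1 * U b 2 * U d 3 + U a 0 * U c 1 * U d 2 * U b 3 + U a 0 * U d 1 * U b 2 * U c 3 - U a 0 * U d 1 * U c 2 * U b 3 - U b 0 * U a 1 * U c 2 * U d 3 + U b 0 * U a 1 * U d 2 * U c 3 + U b 0 * U c 1 * U a 2 * U d 3 - U b 0 * U c 1 * U d 2 * U a 3 - U b 0 * U d 1 * U a 2 * U c 3 + U b 0 * U d 1 * U c 2 * U a 3 + U c 0 * U a 1 * U b 2 * U d 3 - U c 0 * U a 1 * U d 2 * U b 3 - U c 0 * U b 1 * U a 2 * U d 3 + U c 0 * U b 1 * U d 2 * U a 3 + U c 0 * U d 1 * U a 2 * U b 3 - U c 0 * U d 1 * U b 2 * U a 3 - U d 0 * U a 1 * U b 2 * U c 3 + U d 0 * U a 1 * U c 2 * U b 3 + U d 0 * U b 1 * U a 2 * U c 3 - U d 0 * U b 1 * U c 2 * U a 3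 - U d 0 * U c 1 * U a 2 * U b 3 + U d 0 * U c 1 * U b 2 * U a 3"
  unfolding brk_def det4 by (simp add: algebra_simps)

definition mm :: "config \<Rightarrow> nat \<Rightarrow> nat \<Rightarrow> nat \<Rightarrow> nat \<Rightarrow> complex" where
  "mm U x y i j = U x i * U y j - U x j * U y i"

lemma brk_lap: "brk U x y z w = mm U x y 0 1 * mm U z w 2 3 - mm U x y 0 2 * mm U z w 1 3 + mm U x y 0 3 * mm U z w 1 2
  + mm U x y 1 2 * mm U z w 0 3 - mm U x y 1 3 * mm U z w 0 2 + mm U x y 2 3 * mm U z w 0 1"
  unfolding brk_expand mm_def by (simp add: algebra_simps)

lemma core:
  fixes wa wb wc wd we wf :: complex and U :: config
  defines "om \<equiv> \<lambda>x y. wa * mm U x y 0 1 + wb * mm U x y 0 2 + wc * mm U x y 0 3 + wd * mm U x y 1 2 + we * mm U x y 1 3 + wf * mm U x y 2 3"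
  shows "om 0 1 * om 2 3 - om 0 2 * om 1 3 + om 0 3 * om 1 2 = (wa*wf - wb*we + wc*wd) * brk U 0 1 2 3"
  unfolding om_def brk_expand mm_def by (simp add: algebra_simps)

lemma plk: "brk U 0 1 4 5 * brk U 2 3 4 5 - brk U 0 2 4 5 * brk U 1 3 4 5 + brk U 0 3 4 5 * brk U 1 2 4 5 = 0"
proof -
  have e: "brk U x y 4 5 = mm U 4 5 2 3 * mm U x y 0 1 + (- mm U 4 5 1 3) * mm U x y 0 2 + mm U 4 5 1 2 * mm U x y 0 3
     + mm U 4 5 0 3 * mm U x y 1 2 + (- mm U 4 5 0 2) * mm U x y 1 3 + mm U 4 5 0 1 * mm U x y 2 3" for x y
    unfolding brk_lap by (simp add: algebra_simps)
  have q: "mm U 4 5 2 3 * mm U 4 5 0 1 - (- mm U 4 5 1 3) * (- mm U 4 5 0 2) + mm U 4 5 1 2 * mm U 4 5 0 3 = 0"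
    unfolding mm_def by (simp add: algebra_simps)
  show ?thesis unfolding e using core[where wa="mm U 4 5 2 3" and wb="- mm U 4 5 1 3" and wc="mm U 4 5 1 2" and wd="mm U 4 5 0 3" and we="- mm U 4 5 0 2" and wf="mm U 4 5 0 1" and U=U] q
    by simp
qed

lemma brk_norm:
  "brk U 0 1 3 2 = - brk U 0 1 2 3"
  "brk U 0 1 4 2 = - brk U 0 1 2 4"
  "brk U 0 1 4 3 = - brk U 0 1 3 4"
  "brk U 0 1 5 4 = - brk U 0 1 4 5"
  "brk U 0 2 4 3 = - brk U 0 2 3 4"
  "brk U 0 2 5 3 = - brk U 0 2 3 5"
  "brk U 1 3 5 4 = - brk U 1 3 4 5"
  "brk U 1 4 3 5 = - brk U 1 3 4 5"
  "brk U 1 4 5 2 = brk U 1 2 4 5"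
  "brk U 1 4 5 3 = brk U 1 3 4 5"
  "brk U 1 5 3 4 = brk U 1 3 4 5"
  "brk U 2 3 5 4 = - brk U 2 3 4 5"
  "brk U 2 4 3 5 = - brk U 2 3 4 5"
  "brk U 2 4 5 3 = brk U 2 3 4 5"
  "brk U 2 5 3 4 = brk U 2 3 4 5"
  "brk U 3 4 5 2 = - brk U 2 3 4 5"
  by (simp_all add: brk_expand algebra_simps)

definition sg1 :: "nat \<Rightarrow> nat" where "sg1 = transpose 3 4"
definition sg2 :: "nat \<Rightarrow> nat" where "sg2 = transpose 3 4 \<circ> transpose 4 5"
definition sg3 :: "nat \<Rightarrow> nat" where "sg3 = transpose 2 3 \<circ> transpose 3 4 \<circ> transpose 4 5"
definition sg4 :: "nat \<Rightarrow> nat" where "sg4 = id"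
definition sg5 :: "nat \<Rightarrow> nat" where "sg5 = transpose 4 5"
definition sg6 :: "nat \<Rightarrow> nat" where "sg6 = transpose 4 5 \<circ> transpose 3 4"

lemma sg1_vals: "sg1 0 = 0" "sg1 1 = 1" "sg1 2 = 2" "sg1 3 = 4" "sg1 4 = 3" "sg1 5 = 5"
  by (simp_all add: sg1_def transpose_def)


lemma sg2_vals: "sg2 0 = 0" "sg2 1 = 1" "sg2 2 = 2" "sg2 3 = 4" "sg2 4 = 5" "sg2 5 = 3"
  by (simp_all add: sg2_def transpose_def)


lemma sg3_vals: "sg3 0 = 0" "sg3 1 = 1" "sg3 2 = 3" "sg3 3 = 4" "sg3 4 = 5" "sg3 5 = 2"
  by (simp_all add: sg3_def transpose_def)


lemma sg4_vals: "sg4 0 = 0" "sg4 1 = 1" "sg4 2 = 2" "sg4 3 = 3" "sg4 4 = 4" "sg4 5 = 5"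
  by (simp_all add: sg4_def transpose_def)


lemma sg5_vals: "sg5 0 = 0" "sg5 1 = 1" "sg5 2 = 2" "sg5 3 = 3" "sg5 4 = 5" "sg5 5 = 4"
  by (simp_all add: sg5_def transpose_def)


lemma sg6_vals: "sg6 0 = 0" "sg6 1 = 1" "sg6 2 = 2" "sg6 3 = 5" "sg6 4 = 3" "sg6 5 = 4"
  by (simp_all add: sg6_def transpose_def)

lemma sg1_perm: "sg1 permutes {..<6}"
  unfolding sg1_def by (auto intro!: permutes_compose permutes_swap_id permutes_id)

lemma sg2_perm: "sg2 permutes {..<6}"
  unfolding sg2_def by (auto intro!: permutes_compose permutes_swap_id permutes_id)

lemma sg3_perm: "sg3 permutes {..<6}"
  unfolding sg3_def by (auto intro!: permutes_compose permutes_swap_id permutes_id)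

lemma sg4_perm: "sg4 permutes {..<6}"
  unfolding sg4_def by (auto intro!: permutes_compose permutes_swap_id permutes_id)

lemma sg5_perm: "sg5 permutes {..<6}"
  unfolding sg5_def by (auto intro!: permutes_compose permutes_swap_id permutes_id)

lemma sg6_perm: "sg6 permutes {..<6}"
  unfolding sg6_def by (auto intro!: permutes_compose permutes_swap_id permutes_id)

lemma key3: "3 * (brk U 0 1 2 3 * brk U 0 1 4 5 * brk U 2 3 4 5) = Bperm sg1 U + Bperm sg2 U + Bperm sg3 U - Bperm sg4 U - Bperm sg5 U + Bperm sg6 U"
proof -
  have "Bperm sg1 U + Bperm sg2 U + Bperm sg3 U - Bperm sg4 U - Bperm sg5 U + Bperm sg6 U = 3 * (brk U 0 1 2 3 * brk U 0 1 4 5 * brk U 2 3 4 5) - brk U 0 1 2 3 *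
     (brk U 0 1 4 5 * brk U 2 3 4 5 - brk U 0 2 4 5 * brk U 1 3 4 5 + brk U 0 3 4 5 * brk U 1 2 4 5)"
    unfolding Bperm_def sg1_vals sg2_vals sg3_vals sg4_vals sg5_vals sg6_vals brk_norm
    by (simp add: algebra_simps)
  then show ?thesis using plk[of U] by simp
qed

lemma key: "brk U 0 1 2 3 * brk U 0 1 4 5 * brk U 2 3 4 5 = (1/3::complex) * (Bperm sg1 U + Bperm sg2 U + Bperm sg3 U - Bperm sg4 U - Bperm sg5 U + Bperm sg6 U)"
proof -
  have e: "3 * (brk U 0 1 2 3 * brk U 0 1 4 5 * brk U 2 3 4 5) = Bperm sg1 U + Bperm sg2 U + Bperm sg3 U - Bperm sg4 U - Bperm sg5 U + Bperm sg6 U" by (rule key3)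
  show ?thesis by (simp only: e[symmetric]) simp
qed

lemma sdelta: "finite P \<Longrightarrow> s \<in> P \<Longrightarrow> (\<Sum>\<sigma>\<in>P. (if \<sigma> = s then (c::complex) else 0) * g \<sigma>) = c * g s"
proof -
  assume "finite P" "s \<in> P"
  have "(\<Sum>\<sigma>\<in>P. (if \<sigma> = s then c else 0) * g \<sigma>) = (\<Sum>\<sigma>\<in>P. (if \<sigma> = s then c * g \<sigma> else 0))"
    by (intro sum.cong) auto
  also have "\<dots> = c * g s" using \<open>finite P\<close> \<open>s \<in> P\<close> by (simp add: sum.delta)
  finally show ?thesis .
qed


theorem mainTheorem5:
  shows "in_B_ideal (\<lambda>U. brk U 0 1 2 3 * brk U 0 1 4 5 * brk U 2 3 4 5)
    \<and> (\<forall>U. brk U 0 1 2 3 \<noteq> 0 \<and> brk U 0 1 4 5 \<noteq> 0 \<and> brk U 2 3 4 5 \<noteq> 0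
          \<longrightarrow> (\<exists>\<sigma>. \<sigma> permutes {..<6} \<and> Bperm \<sigma> U \<noteq> 0))"
proof
  let ?P = "{\<sigma>::nat\<Rightarrow>nat. \<sigma> permutes {..<6::nat}}"
  have fin: "finite ?P" by (rule finite_permutations) simp
  define r :: "(nat \<Rightarrow> nat) \<Rightarrow> config \<Rightarrow> complex" where
    "r = (\<lambda>\<sigma> U. (if \<sigma> = sg1 then (1/3::complex) else 0) + (if \<sigma> = sg2 then (1/3::complex) else 0) + (if \<sigma> = sg3 then (1/3::complex) else 0) + (if \<sigma> = sg4 then (-1/3::complex) else 0) + (if \<sigma> = sg5 then (-1/3::complex) else 0) + (if \<sigma> = sg6 then (1/3::complex) else 0))"
  have rB: "r \<sigma> \<in> bracket_alg" for \<sigma>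
    unfolding r_def by (rule bracket_alg.const)
  have "(\<Sum>\<sigma>\<in>?P. r \<sigma> U * Bperm \<sigma> U) = brk U 0 1 2 3 * brk U 0 1 4 5 * brk U 2 3 4 5" for U
  proof -
    have "(\<Sum>\<sigma>\<in>?P. r \<sigma> U * Bperm \<sigma> U) = (\<Sum>\<sigma>\<in>?P. (if \<sigma> = sg1 then (1/3::complex) else 0) * Bperm \<sigma> U) + (\<Sum>\<sigma>\<in>?P. (if \<sigma> = sg2 then (1/3::complex) else 0) * Bperm \<sigma> U) + (\<Sum>\<sigma>\<in>?P. (if \<sigma> = sg3 then (1/3::complex) else 0) * Bperm \<sigma> U) + (\<Sum>\<sigma>\<in>?P. (if \<sigma> = sg4 then (-1/3::complex) else 0) * Bperm \<sigma> U) + (\<Sum>\<sigma>\<in>?P. (if \<sigma> = sg5 then (-1/3::complex) else 0) * Bperm \<sigma> U) + (\<Sum>\<sigma>\<in>?P. (if \<sigma> = sg6 then (1/3::complex) else 0) * Bperm \<sigma> U)"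
      unfolding r_def by (simp add: ring_distribs sum.distrib)
    also have "\<dots> = (1/3::complex) * Bperm sg1 U + (1/3::complex) * Bperm sg2 U + (1/3::complex) * Bperm sg3 U + (-1/3::complex) * Bperm sg4 U + (-1/3::complex) * Bperm sg5 U + (1/3::complex) * Bperm sg6 U"
      using fin sg1_perm sg2_perm sg3_perm sg4_perm sg5_perm sg6_perm by (simp only: sdelta mem_Collect_eq)
    also have "\<dots> = (1/3::complex) * (Bperm sg1 U + Bperm sg2 U + Bperm sg3 U - Bperm sg4 U - Bperm sg5 U + Bperm sg6 U)" by (simp add: algebra_simps)
    finally have "(\<Sum>\<sigma>\<in>?P. r \<sigma> U * Bperm \<sigma> U) = (1/3::complex) * (Bperm sg1 U + Bperm sg2 U + Bperm sg3 U - Bperm sg4 U - Bperm sg5 U + Bperm sg6 U)" .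
    then show ?thesis using key[of U] by metis
  qed
  then show "in_B_ideal (\<lambda>U. brk U 0 1 2 3 * brk U 0 1 4 5 * brk U 2 3 4 5)"
    unfolding in_B_ideal_def using rB by (intro exI[of _ r]) auto
next
  show "\<forall>U. brk U 0 1 2 3 \<noteq> 0 \<and> brk U 0 1 4 5 \<noteq> 0 \<and> brk U 2 3 4 5 \<noteq> 0
          \<longrightarrow> (\<exists>\<sigma>. \<sigma> permutes {..<6} \<and> Bperm \<sigma> U \<noteq> 0)"
  proof (intro allI impI)
    fix U assume h: "brk U 0 1 2 3 \<noteq> 0 \<and> brk U 0 1 4 5 \<noteq> 0 \<and> brk U 2 3 4 5 \<noteq> 0"
    then have "brk U 0 1 2 3 * brk U 0 1 4 5 * brk U 2 3 4 5 \<noteq> 0" by simp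
    then have nz: "(1/3::complex) * (Bperm sg1 U + Bperm sg2 U + Bperm sg3 U - Bperm sg4 U - Bperm sg5 U + Bperm sg6 U) \<noteq> 0" unfolding key[of U] .
    show "\<exists>\<sigma>. \<sigma> permutes {..<6} \<and> Bperm \<sigma> U \<noteq> 0"
    proof (rule ccontr)
      assume "\<not> ?thesis"
      then have "Bperm sg1 U = 0" "Bperm sg2 U = 0" "Bperm sg3 U = 0" "Bperm sg4 U = 0" "Bperm sg5 U = 0" "Bperm sg6 U = 0" using sg1_perm sg2_perm sg3_perm sg4_perm sg5_perm sg6_perm by auto
      then show False using nz by simp
    qed
  qed
qed

end
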